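(* Let $a\in\mathbb N$ and let $\mathfrak o$ be a compact discrete valuation ring with residue field cardinality $q$; put $t=q^{-s}$. Let $V_{1,a}(\mathfrak o)$ be the $\mathfrak o$-representation of the star quiver $\mathsf S_a$ in which every vertex is represented by $\mathfrak o$ and every arrow by the identity map. Then $$\zeta_{V_{1,a}(\mathfrak o)}(s)=\frac{C_{a-1}(t,t)}{\prod_{i=1}^{a}(1-t^i)}.$$
   Context: The star quiver $\mathsf S_a$ has vertices $v_1,\dots,v_a$ and $a-1$ arrows $v_1\to v_j$ ($j=2,\dots,a$). For a representation $V=(\mathcal L_\iota,f_\phi)$, a subrepresentation is a tuple of submodules $\Lambda_\iota\le\mathcal L_\iota$ with $f_\phi(\Lambda_{\mathrm{tail}(\phi)})\subseteq\Lambda_{\mathrm{head}(\phi)}$, and $\zeta_V(s)=\sum_{V'}\prod_\iota|\mathcal L_\iota:\Lambda_\iota|^{-s}$ over finite-index subrepresentations. Carlitz' $q$-Eulerian polynomial is $C_{m}(x,y)=\sum_{w\in S_{m}}x^{\mathrm{des}(w)}y^{\mathrm{maj}(w)}$, where for $w\in S_m$, $\mathrm{des}(w)=|\{i\in[m-1]:w(i)>w(i+1)\}|$ and $\mathrm{maj}(w)=\sum_{i: w(i)>w(i+1)}i$ (with $C_0=1$). *)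

theory Defs
  imports "HOL-Analysis.Analysis" "HOL-Combinatorics.Permutations"
begin

section \<open>Ideals (= o-submodules of the regular module o)\<close>

definition is_ideal :: "'a::comm_ring_1 set \<Rightarrow> bool" where
  "is_ideal I \<longleftrightarrow> 0 \<in> I \<and> (\<forall>x\<in>I. \<forall>y\<in>I. x + y \<in> I) \<and> (\<forall>r. \<forall>x\<in>I. r * x \<in> I)"

definition principal_ideal :: "'a::comm_ring_1 \<Rightarrow> 'a set" where
  "principal_ideal g = {r * g | r. True}"

definition maximal_ideal :: "'a::comm_ring_1 set \<Rightarrow> bool" where
  "maximal_ideal M \<longleftrightarrow> is_ideal M \<and> M \<noteq> UNIV \<and>
     (\<forall>J. is_ideal J \<and> M \<subseteq> J \<longrightarrow> J = M \<or> J = UNIV)"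

definition is_dvr :: "'a::idom itself \<Rightarrow> bool" where
  "is_dvr _ \<longleftrightarrow> (\<forall>I::'a set. is_ideal I \<longrightarrow> (\<exists>g. I = principal_ideal g))
      \<and> (\<exists>!M::'a set. maximal_ideal M)
      \<and> (\<exists>x::'a. x \<noteq> 0 \<and> \<not> x dvd 1)"

definition max_ideal :: "'a::comm_ring_1 set" where
  "max_ideal = (THE M. maximal_ideal M)"

definition cosets :: "'a::comm_ring_1 set \<Rightarrow> 'a set set" where
  "cosets I = (\<lambda>x. (\<lambda>y. x + y) ` I) ` UNIV"

definition index :: "'a::comm_ring_1 set \<Rightarrow> nat" where
  "index I = card (cosets I)"

definition finite_index :: "'a::comm_ring_1 set \<Rightarrow> bool" where
  "finite_index I \<longleftrightarrow> finite (cosets I)"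

definition residue_card :: "'a::comm_ring_1 itself \<Rightarrow> nat" where
  "residue_card _ = index (max_ideal :: 'a set)"

definition madic_open :: "'a::comm_ring_1 set \<Rightarrow> bool" where
  "madic_open S \<longleftrightarrow> (\<forall>x\<in>S. \<exists>n g. max_ideal = principal_ideal g \<and>
       (\<lambda>y. x + y) ` principal_ideal (g ^ n) \<subseteq> S)"

definition madic_compact :: "'a::comm_ring_1 itself \<Rightarrow> bool" where
  "madic_compact _ \<longleftrightarrow> (\<forall>\<U>::'a set set. (\<forall>U\<in>\<U>. madic_open U) \<and> \<Union>\<U> = UNIV \<longrightarrow>
       (\<exists>\<F>\<subseteq>\<U>. finite \<F> \<and> \<Union>\<F> = UNIV))"

text \<open>Arrows of the star quiver S_a, an arrow v_1 -> v_j encoded as the pair (1, j).\<close>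
definition star_arrows :: "nat \<Rightarrow> (nat \<times> nat) set" where
  "star_arrows a = {(1, j) | j. 2 \<le> j \<and> j \<le> a}"

text \<open>Finite-index subrepresentations of the representation of S_a with every vertex
  represented by o and arrow maps f; a subrepresentation is a tuple (indexed by 1..a,
  normalized to UNIV outside) of finite-index submodules.\<close>
definition star_subreps :: "nat \<Rightarrow> (nat \<times> nat \<Rightarrow> 'a::comm_ring_1 \<Rightarrow> 'a) \<Rightarrow> (nat \<Rightarrow> 'a set) set" where
  "star_subreps a f = {\<Lambda>. (\<forall>i\<in>{1..a}. is_ideal (\<Lambda> i) \<and> finite_index (\<Lambda> i))
       \<and> (\<forall>i. i \<notin> {1..a} \<longrightarrow> \<Lambda> i = UNIV)
       \<and> (\<forall>\<phi>\<in>star_arrows a. f \<phi> ` \<Lambda> (fst \<phi>) \<subseteq> \<Lambda> (snd \<phi>))}"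

definition zeta_term :: "nat \<Rightarrow> complex \<Rightarrow> (nat \<Rightarrow> 'a::comm_ring_1 set) \<Rightarrow> complex" where
  "zeta_term a s \<Lambda> = (\<Prod>i\<in>{1..a}. (of_nat (index (\<Lambda> i)) :: complex) powr (- s))"

definition descents :: "nat \<Rightarrow> (nat \<Rightarrow> nat) \<Rightarrow> nat set" where
  "descents m w = {i \<in> {1..<m}. w i > w (Suc i)}"

definition des :: "nat \<Rightarrow> (nat \<Rightarrow> nat) \<Rightarrow> nat" where
  "des m w = card (descents m w)"

definition maj :: "nat \<Rightarrow> (nat \<Rightarrow> nat) \<Rightarrow> nat" where
  "maj m w = \<Sum>(descents m w)"

definition carlitz :: "nat \<Rightarrow> complex \<Rightarrow> complex \<Rightarrow> complex" where
  "carlitz m x y = (\<Sum>w\<in>{w. w permutes {1..m}}. x ^ des m w * y ^ maj m w)"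

end

theory Submission
  imports Defs
begin


definition prec :: "(nat \<Rightarrow> nat) \<Rightarrow> nat \<Rightarrow> nat \<Rightarrow> bool" where
  "prec f x y \<longleftrightarrow> f y < f x \<or> (f x = f y \<and> x < y)"

definition rk :: "nat \<Rightarrow> (nat \<Rightarrow> nat) \<Rightarrow> nat \<Rightarrow> nat" where
  "rk m f x = (if x \<in> {1..m} then Suc (card {y\<in>{1..m}. prec f y x}) else x)"

lemma prec_trans: "prec f x y \<Longrightarrow> prec f y z \<Longrightarrow> prec f x z"
  by (auto simp: prec_def)
lemma prec_irrefl: "\<not> prec f x x"
  by (auto simp: prec_def)
lemma prec_total: "x \<noteq> y \<Longrightarrow> prec f x y \<or> prec f y x"
  by (auto simp: prec_def)

lemma rk_less:
  assumes "x \<in> {1..m}" "y \<in> {1..m}" "prec f x y"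
  shows "rk m f x < rk m f y"
proof -
  have "{z\<in>{1..m}. prec f z x} \<subset> {z\<in>{1..m}. prec f z y}"
    using assms prec_trans[of f _ x y] prec_irrefl[of f x] by blast
  then have "card {z\<in>{1..m}. prec f z x} < card {z\<in>{1..m}. prec f z y}"
    by (rule psubset_card_mono[rotated]) auto
  thus ?thesis using assms by (simp add: rk_def)
qed

lemma rk_range:
  assumes "x \<in> {1..m}" shows "rk m f x \<in> {1..m}"
proof -
  have "{y\<in>{1..m}. prec f y x} \<subseteq> {1..m} - {x}" using prec_irrefl[of f x] by blast
  then have "card {y\<in>{1..m}. prec f y x} \<le> card ({1..m} - {x})"
    by (intro card_mono) auto
  also have "\<dots> = m - 1" using assms by simp
  finally show ?thesis using assms by (auto simp: rk_def)
qed

lemma rk_inj: "inj_on (rk m f) {1..m}"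
proof (rule inj_onI, rule ccontr)
  fix x y assume xy: "x \<in> {1..m}" "y \<in> {1..m}" "rk m f x = rk m f y" "x \<noteq> y"
  then consider "prec f x y" | "prec f y x" using prec_total by blast
  then show False
    by cases (use rk_less[of x m y f] rk_less[of y m x f] xy in auto)
qed

lemma rk_permutes: "rk m f permutes {1..m}"
proof (rule inj_imp_permutes[OF rk_inj])
  show "\<And>x. x \<in> {1..m} \<Longrightarrow> rk m f x \<in> {1..m}" by (rule rk_range)
qed (auto simp: rk_def)

lemma rk_uniq:
  assumes w: "w permutes {1..m}" and c: "\<And>i. i \<in> {1..<m} \<Longrightarrow> prec f (w i) (w (Suc i))"
    and i: "i \<in> {1..m}"
  shows "rk m f (w i) = i"
proof -
  define r where "r = (\<lambda>i. rk m f (w i))"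
  have inr: "r i \<in> {1..m}" if "i \<in> {1..m}" for i
    using permutes_in_image[OF w] rk_range that by (auto simp: r_def)
  have step: "r i < r (Suc i)" if "i \<in> {1..<m}" for i
    unfolding r_def using that c[OF that] permutes_in_image[OF w] by (intro rk_less) auto
  have mono: "r i + (j - i) \<le> r j" if "1 \<le> i" "i \<le> j" "j \<le> m" for i j
    using that(2,3)
  proof (induction j rule: dec_induct)
    case base then show ?case by simp
  next
    case (step n)
    then have "r i + (n - i) \<le> r n" by simp
    moreover have "r n < r (Suc n)" using step.hyps step.prems that(1) \<open>\<And>i. i \<in> {1..<m} \<Longrightarrow> r i < r (Suc i)\<close> by auto
    ultimately show ?case using step.hyps by linarith
  qed
  have "r 1 + (i - 1) \<le> r i" using mono[of 1 i] i by auto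
  moreover have "r i + (m - i) \<le> r m" using mono[of i m] i by auto
  moreover have "r 1 \<ge> 1" "r m \<le> m" using inr[of 1] inr[of m] i by auto
  ultimately show ?thesis using i by (simp add: r_def)
qed

lemma inv_rk_eq:
  assumes w: "w permutes {1..m}" and c: "\<And>i. i \<in> {1..<m} \<Longrightarrow> prec f (w i) (w (Suc i))"
  shows "inv (rk m f) = w"
proof
  fix i
  show "inv (rk m f) i = w i"
  proof (cases "i \<in> {1..m}")
    case True
    have "rk m f (w i) = i" using rk_uniq[OF w c True] by simp
    then show ?thesis using permutes_inverses(2)[OF rk_permutes, of m f "w i"] by simp
  next
    case False
    then show ?thesis using permutes_not_in[OF w False] permutes_not_in[OF permutes_inv[OF rk_permutes] False] by simp
  qed
qed

lemma inv_rk_permutes: "inv (rk m f) permutes {1..m}"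
  by (rule permutes_inv[OF rk_permutes])

lemma inv_rk_prec:
  assumes i: "i \<in> {1..<m}"
  shows "prec f (inv (rk m f) i) (inv (rk m f) (Suc i))"
proof (rule ccontr)
  let ?w = "inv (rk m f)"
  assume np: "\<not> ?thesis"
  have x: "?w i \<in> {1..m}" "?w (Suc i) \<in> {1..m}" using i permutes_in_image[OF inv_rk_permutes] by auto
  have "rk m f (?w i) = i" "rk m f (?w (Suc i)) = Suc i"
    using permutes_inverses(1)[OF rk_permutes] by auto
  then have "?w i \<noteq> ?w (Suc i)" by auto
  then have "prec f (?w (Suc i)) (?w i)" using np prec_total by blast
  from rk_less[OF x(2) x(1) this] \<open>rk m f (?w i) = i\<close> \<open>rk m f (?w (Suc i)) = Suc i\<close> show False by simp
qed

definition dsc :: "nat \<Rightarrow> (nat \<Rightarrow> nat) \<Rightarrow> nat \<Rightarrow> nat" where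
  "dsc m w k = (if k \<in> descents m w then 1 else 0)"

definition hh :: "nat \<Rightarrow> (nat \<Rightarrow> nat) \<Rightarrow> (nat \<Rightarrow> nat) \<Rightarrow> nat \<Rightarrow> nat" where
  "hh m w g i = (if i \<in> {1..m} then \<Sum>k\<in>{i..m}. g k + dsc m w k else 0)"

definition Phi :: "nat \<Rightarrow> (nat \<Rightarrow> nat) \<Rightarrow> (nat \<Rightarrow> nat) \<Rightarrow> nat \<Rightarrow> nat" where
  "Phi m w g = (\<lambda>j. if j \<in> {1..m} then hh m w g (inv w j) else 0)"

lemma dsc_m: "dsc m w m = 0"
  by (simp add: dsc_def descents_def)

lemma hh_step:
  assumes "i \<in> {1..m}"
  shows "hh m w g i = g i + dsc m w i + hh m w g (Suc i)"
proof (cases "Suc i \<le> m")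
  case True
  then show ?thesis using assms by (simp add: hh_def sum.atLeast_Suc_atMost)
next
  case False
  then have "i = m" using assms by auto
  then show ?thesis using assms by (simp add: hh_def dsc_m)
qed

lemma hh_out: "hh m w g (Suc m) = 0"
  by (simp add: hh_def)

lemma Phi_w:
  assumes w: "w permutes {1..m}" and i: "i \<in> {1..m}"
  shows "Phi m w g (w i) = hh m w g i"
  using i permutes_in_image[OF w] permutes_inverses(2)[OF w] by (simp add: Phi_def)

lemma Phi_w_Suc:
  assumes w: "w permutes {1..m}" and i: "i \<in> {1..m}"
  shows "Phi m w g (w (Suc i)) = hh m w g (Suc i)"
proof (cases "Suc i \<le> m")
  case True
  then show ?thesis using Phi_w[OF w, of "Suc i"] by simp
next
  case False
  then have "Suc i = Suc m" using i by auto
  moreover have "w (Suc m) = Suc m" by (rule permutes_not_in[OF w]) auto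
  ultimately show ?thesis by (simp add: Phi_def hh_def)
qed

lemma Phi_prec:
  assumes w: "w permutes {1..m}" and i: "i \<in> {1..<m}"
  shows "prec (Phi m w g) (w i) (w (Suc i))"
proof -
  have i': "i \<in> {1..m}" using i by auto
  have eq: "Phi m w g (w i) = g i + dsc m w i + Phi m w g (w (Suc i))"
    using Phi_w[OF w i'] Phi_w_Suc[OF w i'] hh_step[OF i'] by simp
  have ne: "w i \<noteq> w (Suc i)" using permutes_inj[OF w] by (auto dest: injD)
  show ?thesis
  proof (cases "w (Suc i) < w i")
    case True
    then have "dsc m w i = 1" using i by (simp add: dsc_def descents_def)
    then show ?thesis using eq by (simp add: prec_def)
  next
    case False
    then show ?thesis using eq ne by (auto simp: prec_def)
  qed
qed

lemma inv_rk_Phi: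
  assumes w: "w permutes {1..m}"
  shows "inv (rk m (Phi m w g)) = w"
  by (rule inv_rk_eq[OF w Phi_prec[OF w]])



lemma tri_sum: "(\<Sum>i\<in>{1..m}. \<Sum>k\<in>{i..m}. c k) = (\<Sum>k\<in>{1..m}. k * c k :: nat)"
proof (induction m)
  case 0 then show ?case by simp
next
  case (Suc m)
  have "(\<Sum>i\<in>{1..Suc m}. \<Sum>k\<in>{i..Suc m}. c k) = (\<Sum>i\<in>{1..m}. \<Sum>k\<in>{i..Suc m}. c k) + c (Suc m)"
    by (simp add: sum.cl_ivl_Suc)
  also have "(\<Sum>i\<in>{1..m}. \<Sum>k\<in>{i..Suc m}. c k) = (\<Sum>i\<in>{1..m}. (\<Sum>k\<in>{i..m}. c k) + c (Suc m))"
    by (intro sum.cong) (auto simp: sum.cl_ivl_Suc)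
  also have "\<dots> = (\<Sum>k\<in>{1..m}. k * c k) + m * c (Suc m)"
    by (simp only: sum.distrib Suc.IH) simp
  finally have "(\<Sum>i\<in>{1..Suc m}. \<Sum>k\<in>{i..Suc m}. c k) = (\<Sum>k\<in>{1..m}. k * c k) + m * c (Suc m) + c (Suc m)" .
  moreover have "(\<Sum>k\<in>{1..Suc m}. k * c k) = (\<Sum>k\<in>{1..m}. k * c k) + Suc m * c (Suc m)" by simp
  ultimately show ?case by simp
qed

lemma hh_le1:
  assumes "i \<in> {1..m}" shows "hh m w g i \<le> hh m w g 1"
  using assms by (auto simp: hh_def intro!: sum_mono2)

lemma hh1: "hh m w g 1 = (\<Sum>k\<in>{1..m}. g k + dsc m w k)"
  by (cases m) (auto simp: hh_def)

lemma sum_Phi: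
  assumes w: "w permutes {1..m}"
  shows "(\<Sum>j\<in>{1..m}. Phi m w g j) = (\<Sum>k\<in>{1..m}. k * (g k + dsc m w k))"
proof -
  have "(\<Sum>j\<in>{1..m}. Phi m w g j) = (\<Sum>i\<in>{1..m}. Phi m w g (w i))"
    using sum.permute[OF w, of "Phi m w g"] by (simp add: o_def)
  also have "\<dots> = (\<Sum>i\<in>{1..m}. hh m w g i)"
    by (intro sum.cong) (auto simp: Phi_w[OF w])
  also have "\<dots> = (\<Sum>i\<in>{1..m}. \<Sum>k\<in>{i..m}. g k + dsc m w k)"
    by (intro sum.cong) (auto simp: hh_def)
  also have "\<dots> = (\<Sum>k\<in>{1..m}. k * (g k + dsc m w k))" by (rule tri_sum)
  finally show ?thesis .
qed

lemma sum_dsc: "(\<Sum>k\<in>{1..m}. Suc k * dsc m w k) = maj m w + des m w"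
proof -
  have sub: "descents m w \<subseteq> {1..m}" by (auto simp: descents_def)
  have "(\<Sum>k\<in>{1..m}. Suc k * dsc m w k) = (\<Sum>k\<in>{1..m}. if k \<in> descents m w then Suc k else 0)"
    by (intro sum.cong) (auto simp: dsc_def)
  also have "\<dots> = (\<Sum>k\<in>{1..m} \<inter> descents m w. Suc k)"
    by (simp add: sum.inter_restrict)
  also have "{1..m} \<inter> descents m w = descents m w" using sub by blast
  also have "(\<Sum>k\<in>descents m w. Suc k) = (\<Sum>k\<in>descents m w. k) + (\<Sum>k\<in>descents m w. 1)"
    by (simp only: Suc_eq_plus1 sum.distrib)
  also have "\<dots> = maj m w + des m w" by (simp add: maj_def des_def)
  finally show ?thesis .
qed

definition unsh :: "nat \<Rightarrow> (nat \<Rightarrow> nat) \<Rightarrow> nat \<Rightarrow> nat" where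
  "unsh m e = (\<lambda>j. if j \<in> {1..m} then e (Suc j) else 0)"

definition gg :: "nat \<Rightarrow> (nat \<Rightarrow> nat) \<Rightarrow> (nat \<Rightarrow> nat) \<Rightarrow> nat \<Rightarrow> nat" where
  "gg m f w = restrict (\<lambda>i. f (w i) - f (w (Suc i)) - dsc m w i) {1..m}"

lemma compat:
  assumes f0: "\<And>j. j \<notin> {1..m} \<Longrightarrow> f j = 0" and n: "n \<in> {1..m}"
  shows "f (inv (rk m f) (Suc n)) + dsc m (inv (rk m f)) n \<le> f (inv (rk m f) n)"
proof (cases "n < m")
  case True
  let ?w = "inv (rk m f)"
  have p: "prec f (?w n) (?w (Suc n))" using inv_rk_prec True n by auto
  show ?thesis
  proof (cases "n \<in> descents m ?w")
    case True
    then have "?w (Suc n) < ?w n" by (simp add: descents_def)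
    then show ?thesis using p True by (auto simp: prec_def dsc_def)
  next
    case False
    then show ?thesis using p by (auto simp: prec_def dsc_def)
  qed
next
  case False
  then have "n = m" using n by auto
  moreover have "inv (rk m f) (Suc m) = Suc m" by (rule permutes_not_in[OF inv_rk_permutes]) auto
  ultimately show ?thesis using f0[of "Suc m"] by (simp add: dsc_m)
qed

lemma surj_hh:
  assumes f0: "\<And>j. j \<notin> {1..m} \<Longrightarrow> f j = 0" and w: "w = inv (rk m f)"
    and n: "1 \<le> n" "n \<le> Suc m"
  shows "hh m w (gg m f w) n = f (w n)"
  using n(2)
proof (induction n rule: inc_induct)
  case base
  have "w (Suc m) = Suc m" unfolding w by (rule permutes_not_in[OF inv_rk_permutes]) auto
  then show ?case using f0[of "Suc m"] by (simp add: hh_out)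
next
  case (step k)
  have k: "k \<in> {1..m}" using step.hyps n(1) by auto
  have c: "f (w (Suc k)) + dsc m w k \<le> f (w k)" unfolding w by (rule compat[OF f0 k])
  have "hh m w (gg m f w) k = gg m f w k + dsc m w k + hh m w (gg m f w) (Suc k)"
    by (rule hh_step[OF k])
  also have "gg m f w k = f (w k) - f (w (Suc k)) - dsc m w k" using k by (simp add: gg_def)
  also note step.IH
  finally show ?case using c by simp
qed

lemma surj_Phi:
  assumes f0: "\<And>j. j \<notin> {1..m} \<Longrightarrow> f j = 0" and w: "w = inv (rk m f)"
  shows "Phi m w (gg m f w) = f"
proof
  fix j
  show "Phi m w (gg m f w) j = f j"
  proof (cases "j \<in> {1..m}")
    case True
    have wp: "w permutes {1..m}" unfolding w by (rule inv_rk_permutes)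
    have "inv w j \<in> {1..m}" using True permutes_in_image[OF permutes_inv[OF wp]] by auto
    then have "hh m w (gg m f w) (inv w j) = f (w (inv w j))" by (intro surj_hh[OF f0 w]) auto
    then show ?thesis using True permutes_inverses(1)[OF wp] by (simp add: Phi_def)
  next
    case False
    then show ?thesis using f0[OF False] by (auto simp: Phi_def)
  qed
qed

lemma gg_Phi:
  assumes w: "w permutes {1..m}" and g: "g \<in> PiE {1..m} (\<lambda>_. UNIV)"
  shows "gg m (Phi m w g) w = g"
proof
  fix i
  show "gg m (Phi m w g) w i = g i"
  proof (cases "i \<in> {1..m}")
    case True
    have "gg m (Phi m w g) w i = Phi m w g (w i) - Phi m w g (w (Suc i)) - dsc m w i"
      using True by (simp add: gg_def)
    then show ?thesis using Phi_w[OF w True] Phi_w_Suc[OF w True] hh_step[OF True]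
      by simp
  next
    case False
    then show ?thesis using g by (auto simp: gg_def PiE_def extensional_def)
  qed
qed



lemma has_sum_times_abs:
  fixes f :: "'a \<Rightarrow> complex" and g :: "'b \<Rightarrow> complex"
  assumes f: "(f has_sum a) A" and fa: "(\<lambda>x. norm (f x)) summable_on A"
    and g: "(g has_sum b) B" and ga: "(\<lambda>y. norm (g y)) summable_on B"
  shows "((\<lambda>(x,y). f x * g y) has_sum (a * b)) (A \<times> B) \<and>
         (\<lambda>z. norm ((\<lambda>(x,y). f x * g y) z)) summable_on (A \<times> B)"
proof -
  define nb where "nb = infsum (\<lambda>y. norm (g y)) B"
  have inner_n: "((\<lambda>y. (\<lambda>(x,y). norm (f x) * norm (g y)) (x, y)) has_sum (norm (f x) * nb)) B" for x
    using has_sum_cmult_right[OF has_sum_infsum[OF ga], of "norm (f x)"] by (simp add: nb_def)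
  have outer_n: "(\<lambda>x. norm (f x) * nb) summable_on A"
    by (rule summable_on_cmult_left[OF fa])
  have absn: "(\<lambda>(x,y). norm (f x) * norm (g y)) summable_on (A \<times> B)"
    by (rule summable_on_SigmaI[OF inner_n outer_n]) auto
  have abs: "(\<lambda>z. norm ((\<lambda>(x,y). f x * g y) z)) summable_on (A \<times> B)"
    using absn by (simp add: case_prod_unfold norm_mult)
  have inner: "((\<lambda>y. (\<lambda>(x,y). f x * g y) (x, y)) has_sum (f x * b)) B" for x
    using has_sum_cmult_right[OF g, of "f x"] by simp
  have outer: "((\<lambda>x. f x * b) has_sum (a * b)) A"
    by (rule has_sum_cmult_left[OF f])
  have "((\<lambda>(x,y). f x * g y) has_sum (a * b)) (A \<times> B)"
    by (rule has_sum_SigmaI[OF inner outer abs_summable_summable[OF abs]])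
  with abs show ?thesis by blast
qed

lemma has_sum_PiE_prod:
  fixes f :: "'a \<Rightarrow> 'b \<Rightarrow> complex"
  assumes "finite A" "\<And>x. x \<in> A \<Longrightarrow> (f x has_sum s x) (B x)"
    "\<And>x. x \<in> A \<Longrightarrow> (\<lambda>y. norm (f x y)) summable_on (B x)"
  shows "((\<lambda>p. \<Prod>x\<in>A. f x (p x)) has_sum (\<Prod>x\<in>A. s x)) (PiE A B) \<and>
         (\<lambda>p. norm (\<Prod>x\<in>A. f x (p x))) summable_on (PiE A B)"
  using assms
proof (induction A rule: finite_induct)
  case empty
  then show ?case by (auto intro!: has_sum_finiteI)
next
  case (insert x F)
  have pi: "PiE (insert x F) B = (\<lambda>(p,y). p(x:=y)) ` (PiE F B \<times> B x)"
    unfolding PiE_insert_eq 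
    by (subst swap_product [symmetric]) (simp add: image_image case_prod_unfold)
  have inj: "inj_on (\<lambda>(p, y). p(x := y)) (PiE F B \<times> B x)"
    using \<open>x \<notin> F\<close> by (rule inj_combinator')
  have comp: "((\<lambda>p. \<Prod>x\<in>insert x F. f x (p x)) \<circ> (\<lambda>(p,y). p(x:=y))) =
              (\<lambda>(p,y). (\<Prod>x'\<in>F. f x' (p x')) * f x y)"
  proof
    fix z :: "('a \<Rightarrow> 'b) \<times> 'b"
    obtain p y where z: "z = (p, y)" by fastforce
    have "(\<Prod>x'\<in>F. f x' ((p(x:=y)) x')) = (\<Prod>x'\<in>F. f x' (p x'))"
      using insert.hyps by (intro prod.cong) auto
    then show "((\<lambda>p. \<Prod>x\<in>insert x F. f x (p x)) \<circ> (\<lambda>(p,y). p(x:=y))) z =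
              (\<lambda>(p,y). (\<Prod>x'\<in>F. f x' (p x')) * f x y) z"
      using insert.hyps by (simp add: z mult.commute)
  qed
  have IH: "((\<lambda>p. \<Prod>x\<in>F. f x (p x)) has_sum (\<Prod>x\<in>F. s x)) (PiE F B)"
    "(\<lambda>p. norm (\<Prod>x\<in>F. f x (p x))) summable_on (PiE F B)"
    using insert.IH insert.prems by auto
  have PL: "((\<lambda>(p,y). (\<Prod>x'\<in>F. f x' (p x')) * f x y) has_sum ((\<Prod>x\<in>F. s x) * s x)) (PiE F B \<times> B x) \<and>
         (\<lambda>z. norm ((\<lambda>(p,y). (\<Prod>x'\<in>F. f x' (p x')) * f x y) z)) summable_on (PiE F B \<times> B x)"
    by (rule has_sum_times_abs[OF IH(1) IH(2) insert.prems(1) insert.prems(2)]) auto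
  have v: "(\<Prod>x\<in>F. s x) * s x = (\<Prod>x\<in>insert x F. s x)"
    using insert.hyps by (simp add: mult.commute)
  have "((\<lambda>p. \<Prod>x\<in>insert x F. f x (p x)) has_sum (\<Prod>x\<in>insert x F. s x)) (PiE (insert x F) B)"
    unfolding pi has_sum_reindex[OF inj] comp using PL v by simp
  moreover have "(\<lambda>p. norm (\<Prod>x\<in>insert x F. f x (p x))) summable_on (PiE (insert x F) B)"
  proof -
    have "((\<lambda>p. norm (\<Prod>x\<in>insert x F. f x (p x))) \<circ> (\<lambda>(p,y). p(x:=y))) =
         (\<lambda>z. norm ((\<lambda>(p,y). (\<Prod>x'\<in>F. f x' (p x')) * f x y) z))"
      using comp by (simp add: fun_eq_iff o_def) 
    then show ?thesis unfolding pi summable_on_reindex[OF inj] using PL by simp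
  qed
  ultimately show ?case by blast
qed

definition Eset :: "nat \<Rightarrow> (nat \<Rightarrow> nat) set" where
  "Eset m = {e. (\<forall>i. i \<notin> {1..Suc m} \<longrightarrow> e i = 0) \<and> (\<forall>j\<in>{2..Suc m}. e j \<le> e 1)}"

definition Tset :: "nat \<Rightarrow> (nat \<times> (nat \<Rightarrow> nat) \<times> (nat \<Rightarrow> nat)) set" where
  "Tset m = (UNIV :: nat set) \<times> ({w. w permutes {1..m}} \<times> PiE {1..m} (\<lambda>_. UNIV :: nat set))"

definition Psi :: "nat \<Rightarrow> nat \<times> (nat \<Rightarrow> nat) \<times> (nat \<Rightarrow> nat) \<Rightarrow> nat \<Rightarrow> nat" where
  "Psi m = (\<lambda>(k, w, g). \<lambda>i. if i = 1 then k + hh m w g 1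
             else if i \<in> {2..Suc m} then Phi m w g (i - 1) else 0)"

definition Jinv :: "nat \<Rightarrow> (nat \<Rightarrow> nat) \<Rightarrow> nat \<times> (nat \<Rightarrow> nat) \<times> (nat \<Rightarrow> nat)" where
  "Jinv m e = (let f = unsh m e; w = inv (rk m f); g = gg m f w in (e 1 - hh m w g 1, w, g))"

lemma Psi_in:
  assumes "x \<in> Tset m" shows "Psi m x \<in> Eset m"
proof -
  obtain k w g where x: "x = (k, w, g)" by (cases x) auto
  have w: "w permutes {1..m}" using assms by (simp add: x Tset_def)
  have le: "Phi m w g j \<le> hh m w g 1" if "j \<in> {1..m}" for j
  proof -
    have "inv w j \<in> {1..m}" using that permutes_in_image[OF permutes_inv[OF w]] by auto
    then show ?thesis using that hh_le1 by (simp add: Phi_def)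
  qed
  show ?thesis unfolding Eset_def
  proof (intro CollectI conjI allI impI ballI)
    fix i assume "i \<notin> {1..Suc m}"
    then show "Psi m x i = 0" by (auto simp: x Psi_def)
  next
    fix j assume j: "j \<in> {2..Suc m}"
    then have "j - 1 \<in> {1..m}" by auto
    then show "Psi m x j \<le> Psi m x 1" using j le[of "j - 1"] by (auto simp: x Psi_def)
  qed
qed

lemma unsh_zero: "j \<notin> {1..m} \<Longrightarrow> unsh m e j = 0"
  by (auto simp: unsh_def)

lemma Jinv_in:
  assumes "e \<in> Eset m" shows "Jinv m e \<in> Tset m"
  using inv_rk_permutes[of m "unsh m e"] by (auto simp: Jinv_def Let_def Tset_def gg_def)

lemma Psi_Jinv:
  assumes e: "e \<in> Eset m" shows "Psi m (Jinv m e) = e"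
proof -
  define f where "f = unsh m e"
  define w where "w = inv (rk m f)"
  define g where "g = gg m f w"
  have f0: "\<And>j. j \<notin> {1..m} \<Longrightarrow> f j = 0" by (simp add: f_def unsh_zero)
  have wp: "w permutes {1..m}" unfolding w_def by (rule inv_rk_permutes)
  have J: "Jinv m e = (e 1 - hh m w g 1, w, g)" by (simp add: Jinv_def Let_def f_def w_def g_def)
  have P: "Phi m w g = f" unfolding g_def by (rule surj_Phi[OF f0 w_def])
  have h1: "hh m w g 1 = f (w 1)" unfolding g_def by (rule surj_hh[OF f0 w_def]) auto
  have le: "f (w 1) \<le> e 1"
  proof (cases "m = 0")
    case True
    then show ?thesis using f0[of "w 1"] by simp
  next
    case False
    then have "w 1 \<in> {1..m}" using permutes_in_image[OF wp, of 1] by auto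
    then show ?thesis using e by (auto simp: f_def unsh_def Eset_def)
  qed
  show ?thesis
  proof
    fix i
    show "Psi m (Jinv m e) i = e i"
    proof (cases "i = 1")
      case True
      then show ?thesis using le h1 by (simp add: J Psi_def)
    next
      case False
      show ?thesis
      proof (cases "i \<in> {2..Suc m}")
        case True
        then have "f (i - 1) = e i" by (auto simp: f_def unsh_def)
        then show ?thesis using True \<open>i \<noteq> 1\<close> by (simp add: J Psi_def P)
      next
        case False
        then have "e i = 0" using e \<open>i \<noteq> 1\<close> by (auto simp: Eset_def)
        then show ?thesis using False \<open>i \<noteq> 1\<close> by (auto simp: J Psi_def)
      qed
    qed
  qed
qed

lemma Jinv_Psi:
  assumes x: "x \<in> Tset m" shows "Jinv m (Psi m x) = x"
proof -
  obtain k w g where xx: "x = (k, w, g)" by (cases x) auto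
  have w: "w permutes {1..m}" and g: "g \<in> PiE {1..m} (\<lambda>_. UNIV)" using x by (auto simp: xx Tset_def)
  have U: "unsh m (Psi m x) = Phi m w g"
  proof
    fix j show "unsh m (Psi m x) j = Phi m w g j"
      by (cases "j \<in> {1..m}") (auto simp: unsh_def Psi_def xx Phi_def)
  qed
  show ?thesis
    by (simp add: Jinv_def Let_def U inv_rk_Phi[OF w] gg_Phi[OF w g]) (simp add: xx Psi_def)
qed

lemma Psi_weight:
  assumes x: "x = (k, w, g)" "x \<in> Tset m"
  shows "(\<Sum>i\<in>{1..Suc m}. Psi m x i) = k + (\<Sum>i\<in>{1..m}. Suc i * g i) + (maj m w + des m w)"
proof -
  have w: "w permutes {1..m}" using x by (auto simp: Tset_def)
  have "(\<Sum>i\<in>{1..Suc m}. Psi m x i) = Psi m x 1 + (\<Sum>i\<in>{Suc 1..Suc m}. Psi m x i)"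
    by (simp add: sum.atLeast_Suc_atMost)
  also have "(\<Sum>i\<in>{Suc 1..Suc m}. Psi m x i) = (\<Sum>j\<in>{1..m}. Psi m x (Suc j))"
    by (rule sum.shift_bounds_cl_Suc_ivl)
  also have "\<dots> = (\<Sum>j\<in>{1..m}. Phi m w g j)"
    by (intro sum.cong) (auto simp: x Psi_def)
  also have "\<dots> = (\<Sum>k\<in>{1..m}. k * (g k + dsc m w k))" by (rule sum_Phi[OF w])
  also have "Psi m x 1 = k + hh m w g 1" by (simp add: x Psi_def)
  also have "hh m w g 1 = (\<Sum>k\<in>{1..m}. g k + dsc m w k)" by (rule hh1)
  finally have "(\<Sum>i\<in>{1..Suc m}. Psi m x i) =
     k + ((\<Sum>k\<in>{1..m}. g k + dsc m w k) + (\<Sum>k\<in>{1..m}. k * (g k + dsc m w k)))" by simp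
  also have "(\<Sum>k\<in>{1..m}. g k + dsc m w k) + (\<Sum>k\<in>{1..m}. k * (g k + dsc m w k))
     = (\<Sum>k\<in>{1..m}. Suc k * g k + Suc k * dsc m w k)"
    by (simp add: sum.distrib[symmetric] algebra_simps)
  also have "\<dots> = (\<Sum>i\<in>{1..m}. Suc i * g i) + (maj m w + des m w)"
    by (simp only: sum.distrib sum_dsc)
  finally show ?thesis by simp
qed

lemma geo_has_sum:
  fixes z :: complex assumes z: "norm z < 1"
  shows "((\<lambda>k. z ^ k) has_sum (1 / (1 - z))) UNIV \<and> (\<lambda>k. norm (z ^ k)) summable_on UNIV"
proof -
  have sn: "summable (\<lambda>k. norm (z ^ k))" using z by (simp add: norm_power summable_geometric)
  have "((\<lambda>k. z ^ k) has_sum (1 / (1 - z))) UNIV"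
    by (rule norm_summable_imp_has_sum[OF sn]) (use geometric_sums[OF z] in simp)
  moreover have "((\<lambda>k. norm (z ^ k)) has_sum (1 / (1 - norm z))) UNIV"
    by (rule norm_summable_imp_has_sum) (use sn geometric_sums[of "norm z"] z in \<open>simp_all add: norm_power\<close>)
  ultimately show ?thesis by (auto dest: has_sum_imp_summable)
qed

lemma main_sum:
  fixes t :: complex assumes t: "norm t < 1"
  shows "((\<lambda>e. t ^ (\<Sum>i\<in>{1..Suc m}. e i)) has_sum
          (carlitz m t t / (\<Prod>i\<in>{1..Suc m}. (1 - t ^ i)))) (Eset m)"
proof -
  define S where "S = {w :: nat \<Rightarrow> nat. w permutes {1..m}}"
  define G where "G = PiE {1..m} (\<lambda>_. UNIV :: nat set)"
  define B where "B = (\<lambda>w. t ^ des m w * t ^ maj m w)"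
  define C where "C = (\<lambda>g :: nat \<Rightarrow> nat. \<Prod>i\<in>{1..m}. (t ^ Suc i) ^ g i)"
  define P where "P = (\<Prod>i\<in>{1..m}. 1 / (1 - t ^ Suc i))"
  have finS: "finite S" unfolding S_def by (rule finite_permutations) simp
  have hB: "(B has_sum carlitz m t t) S" "(\<lambda>w. norm (B w)) summable_on S"
    using finS by (auto intro!: has_sum_finiteI simp: carlitz_def S_def B_def)
  have ti: "norm (t ^ Suc i) < 1" for i
  proof -
    have "norm t ^ i \<le> 1" using t by (simp add: power_le_one)
    then have "norm t * norm t ^ i \<le> norm t" by (simp add: mult_left_le)
    then show ?thesis using t by (simp add: norm_power norm_mult)
  qed
  have hC: "(C has_sum P) G \<and> (\<lambda>g. norm (C g)) summable_on G"
    unfolding C_def P_def G_def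
    by (rule has_sum_PiE_prod) (use geo_has_sum[OF ti] in auto)
  have hSG: "((\<lambda>(w,g). B w * C g) has_sum (carlitz m t t * P)) (S \<times> G) \<and>
         (\<lambda>z. norm ((\<lambda>(w,g). B w * C g) z)) summable_on (S \<times> G)"
    by (rule has_sum_times_abs) (use hB hC in auto)
  have hA: "((\<lambda>k. t ^ k) has_sum (1 / (1 - t))) UNIV \<and> (\<lambda>k. norm (t ^ k)) summable_on UNIV"
    by (rule geo_has_sum[OF t])
  have hAll: "((\<lambda>(k,z). t ^ k * (\<lambda>(w,g). B w * C g) z) has_sum (1 / (1 - t) * (carlitz m t t * P)))
      (UNIV \<times> (S \<times> G))"
    using has_sum_times_abs[OF conjunct1[OF hA] conjunct2[OF hA] conjunct1[OF hSG] conjunct2[OF hSG]] by blast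
  define F where "F = (\<lambda>(k::nat, z). t ^ k * (\<lambda>(w,g). B w * C g) z)"
  have T: "Tset m = UNIV \<times> (S \<times> G)" by (simp add: Tset_def S_def G_def)
  have hF: "(F has_sum (1 / (1 - t) * (carlitz m t t * P))) (Tset m)"
    using hAll unfolding T F_def by blast
  have wt: "t ^ (\<Sum>i\<in>{1..Suc m}. Psi m x i) = F x" if x: "x \<in> Tset m" for x
  proof -
    obtain k w g where xx: "x = (k, w, g)" by (cases x) auto
    have "t ^ (\<Sum>i\<in>{1..Suc m}. Psi m x i) = t ^ (k + (\<Sum>i\<in>{1..m}. Suc i * g i) + (maj m w + des m w))"
      using Psi_weight[OF xx x] by simp
    also have "\<dots> = t ^ k * ((t ^ des m w * t ^ maj m w) * (\<Prod>i\<in>{1..m}. t ^ (Suc i * g i)))"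
      by (simp add: power_add power_sum)
    also have "(\<Prod>i\<in>{1..m}. t ^ (Suc i * g i)) = C g"
      unfolding C_def by (intro prod.cong refl) (simp only: power_mult)
    finally show ?thesis by (simp add: F_def xx B_def)
  qed
  have val: "1 / (1 - t) * (carlitz m t t * P) = carlitz m t t / (\<Prod>i\<in>{1..Suc m}. (1 - t ^ i))"
  proof -
    have "(\<Prod>i\<in>{1..Suc m}. (1 - t ^ i)) = (1 - t) * (\<Prod>i\<in>{Suc 1..Suc m}. (1 - t ^ i))"
      by (simp add: prod.atLeast_Suc_atMost)
    also have "(\<Prod>i\<in>{Suc 1..Suc m}. (1 - t ^ i)) = (\<Prod>i\<in>{1..m}. (1 - t ^ Suc i))"
      by (rule prod.shift_bounds_cl_Suc_ivl)
    finally have eq: "(\<Prod>i\<in>{1..Suc m}. (1 - t ^ i)) = (1 - t) * (\<Prod>i\<in>{1..m}. (1 - t ^ Suc i))" .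
    have "P = 1 / (\<Prod>i\<in>{1..m}. (1 - t ^ Suc i))"
      unfolding P_def by (simp add: prod_dividef)
    then show ?thesis unfolding eq by simp
  qed
  have "(F has_sum (1 / (1 - t) * (carlitz m t t * P))) (Tset m) =
        ((\<lambda>e. t ^ (\<Sum>i\<in>{1..Suc m}. e i)) has_sum (1 / (1 - t) * (carlitz m t t * P))) (Eset m)"
    by (rule has_sum_reindex_bij_witness[where i = "Jinv m" and j = "Psi m"])
       (erule Jinv_Psi | erule Psi_in | erule Psi_Jinv | erule Jinv_in | erule wt | rule refl)+
  with hF val show ?thesis by simp
qed



lemma P_mem: "x \<in> principal_ideal g \<longleftrightarrow> g dvd x"
  by (auto simp: principal_ideal_def dvd_def mult.commute)

lemma P_ideal: "is_ideal (principal_ideal (g::'a::comm_ring_1))"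
  unfolding is_ideal_def by (auto simp: P_mem)

lemma P_one: "principal_ideal (1::'a::comm_ring_1) = UNIV"
  by (auto simp: P_mem)

lemma P_sub: "principal_ideal a \<subseteq> principal_ideal (b::'a::comm_ring_1) \<longleftrightarrow> b dvd a"
  unfolding subset_iff P_mem by (meson dvd_refl dvd_trans)

lemma ideal_neg: "is_ideal I \<Longrightarrow> x \<in> I \<Longrightarrow> - x \<in> I"
  unfolding is_ideal_def by (metis mult_minus1)

lemma ideal_diff: "is_ideal I \<Longrightarrow> x \<in> I \<Longrightarrow> y \<in> I \<Longrightarrow> x - y \<in> I"
  using ideal_neg[of I y] unfolding is_ideal_def by (metis diff_conv_add_uminus)

lemma coset_eq:
  assumes I: "is_ideal I"
  shows "((\<lambda>y. x + y) ` I = (\<lambda>y. x' + y) ` I) \<longleftrightarrow> x - x' \<in> I"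
proof
  assume eq: "(\<lambda>y. x + y) ` I = (\<lambda>y. x' + y) ` I"
  have "x + 0 \<in> (\<lambda>y. x + y) ` I" using I by (auto simp: is_ideal_def)
  then obtain i where "i \<in> I" "x = x' + i" using eq by auto
  then show "x - x' \<in> I" by simp
next
  assume d: "x - x' \<in> I"
  have d': "x' - x \<in> I" using ideal_neg[OF I d] by simp
  show "(\<lambda>y. x + y) ` I = (\<lambda>y. x' + y) ` I"
  proof (intro set_eqI iffI)
    fix z assume "z \<in> (\<lambda>y. x + y) ` I"
    then obtain i where i: "i \<in> I" "z = x + i" by auto
    have "(x - x') + i \<in> I" using I d i by (auto simp: is_ideal_def)
    moreover have "z = x' + ((x - x') + i)" using i by simp
    ultimately show "z \<in> (\<lambda>y. x' + y) ` I" by blast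
  next
    fix z assume "z \<in> (\<lambda>y. x' + y) ` I"
    then obtain i where i: "i \<in> I" "z = x' + i" by auto
    have "(x' - x) + i \<in> I" using I d' i by (auto simp: is_ideal_def)
    moreover have "z = x + ((x' - x) + i)" using i by simp
    ultimately show "z \<in> (\<lambda>y. x + y) ` I" by blast
  qed
qed

definition reps :: "'a::comm_ring_1 set \<Rightarrow> 'a set \<Rightarrow> bool" where
  "reps R I \<longleftrightarrow> (\<forall>x. \<exists>r\<in>R. x - r \<in> I) \<and> (\<forall>r\<in>R. \<forall>r'\<in>R. r - r' \<in> I \<longrightarrow> r = r')"

lemma reps_bij:
  assumes I: "is_ideal I" and R: "reps R I"
  shows "bij_betw (\<lambda>r. (\<lambda>y. r + y) ` I) R (cosets I)"
proof (rule bij_betwI')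
  fix r r' assume "r \<in> R" "r' \<in> R"
  then show "((\<lambda>y. r + y) ` I = (\<lambda>y. r' + y) ` I) = (r = r')"
    using R coset_eq[OF I] by (auto simp: reps_def)
next
  fix r assume "r \<in> R" then show "(\<lambda>y. r + y) ` I \<in> cosets I" by (auto simp: cosets_def)
next
  fix C assume "C \<in> cosets I"
  then obtain x where C: "C = (\<lambda>y. x + y) ` I" by (auto simp: cosets_def)
  obtain r where "r \<in> R" "x - r \<in> I" using R by (auto simp: reps_def)
  then show "\<exists>r\<in>R. C = (\<lambda>y. r + y) ` I" using coset_eq[OF I] C by blast
qed

lemma reps_index:
  assumes "is_ideal I" "reps R I"
  shows "index I = card R" "finite_index I \<longleftrightarrow> finite R"
  using reps_bij[OF assms] by (auto simp: index_def finite_index_def bij_betw_same_card bij_betw_finite)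

lemma reps_ex:
  assumes I: "is_ideal I" shows "\<exists>R. reps R I"
proof -
  define rep where "rep = (\<lambda>C::'a set. SOME z. z \<in> C)"
  have mem: "x \<in> (\<lambda>y. x + y) ` I" for x
    using I by (auto simp: is_ideal_def intro: image_eqI[of _ _ 0])
  have rep_in: "rep C \<in> C" if CI: "C \<in> cosets I" for C
  proof -
    obtain x where C: "C = (\<lambda>y. x + y) ` I" using CI by (auto simp: cosets_def)
    then have "x \<in> C" using mem by simp
    then show ?thesis unfolding rep_def by (rule someI)
  qed
  have rep_c: "C = (\<lambda>y. rep C + y) ` I" if CI: "C \<in> cosets I" for C
  proof -
    obtain c where c: "C = (\<lambda>y. c + y) ` I" using CI by (auto simp: cosets_def)
    then obtain i where "i \<in> I" "rep C = c + i" using rep_in[OF CI] by auto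
    then have "rep C - c \<in> I" by simp
    then have "c - rep C \<in> I" using ideal_neg[OF I] by fastforce
    then show ?thesis using coset_eq[OF I] c by auto
  qed
  define R where "R = rep ` cosets I"
  have "reps R I"
    unfolding reps_def
  proof (intro conjI allI ballI impI)
    fix x
    let ?C = "(\<lambda>y. x + y) ` I"
    have C: "?C \<in> cosets I" by (auto simp: cosets_def)
    have "?C = (\<lambda>y. rep ?C + y) ` I" by (rule rep_c[OF C])
    then have "x - rep ?C \<in> I" using coset_eq[OF I] by blast
    then show "\<exists>r\<in>R. x - r \<in> I" using C by (auto simp: R_def)
  next
    fix r r' assume "r \<in> R" "r' \<in> R" "r - r' \<in> I"
    then obtain C C' where CC: "C \<in> cosets I" "C' \<in> cosets I" "r = rep C" "r' = rep C'"
      by (auto simp: R_def)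
    have "C = C'" using rep_c[OF CC(1)] rep_c[OF CC(2)] coset_eq[OF I] \<open>r - r' \<in> I\<close> CC by metis
    then show "r = r'" using CC by simp
  qed
  then show ?thesis by blast
qed

lemma reps_pi_iff: "reps R (principal_ideal g) \<longleftrightarrow>
   (\<forall>x. \<exists>r\<in>R. g dvd x - r) \<and> (\<forall>r\<in>R. \<forall>r'\<in>R. g dvd r - r' \<longrightarrow> r = r')"
  by (simp add: reps_def P_mem)

lemma reps_step:
  fixes p :: "'a::idom"
  assumes p: "p \<noteq> 0" and R: "reps R (principal_ideal (p ^ n))" and R1: "reps R1 (principal_ideal p)"
  shows "reps ((\<lambda>(r,s). r + p ^ n * s) ` (R \<times> R1)) (principal_ideal (p ^ Suc n))"
    "inj_on (\<lambda>(r,s). r + p ^ n * s) (R \<times> R1)"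
proof -
  have uniq: "r = r' \<and> s = s'" if rs: "r \<in> R" "r' \<in> R" "s \<in> R1" "s' \<in> R1"
      and d: "p ^ Suc n dvd (r + p ^ n * s) - (r' + p ^ n * s')" for r r' s s'
  proof -
    have "p ^ n dvd p ^ Suc n" by (simp add: le_imp_power_dvd)
    then have "p ^ n dvd (r + p ^ n * s) - (r' + p ^ n * s')" using d dvd_trans by blast
    moreover have "(r + p ^ n * s) - (r' + p ^ n * s') = (r - r') + p ^ n * (s - s')"
      by (simp add: algebra_simps)
    ultimately have "p ^ n dvd r - r'" by (metis dvd_add_left_iff dvd_triv_left)
    then have rr: "r = r'" using R rs by (auto simp: reps_pi_iff)
    then have "p ^ n * p dvd p ^ n * (s - s')" using d by (simp add: algebra_simps)
    then have "p dvd s - s'" using p by simp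
    then have "s = s'" using R1 rs by (auto simp: reps_pi_iff)
    with rr show ?thesis by simp
  qed
  show "inj_on (\<lambda>(r,s). r + p ^ n * s) (R \<times> R1)"
    by (rule inj_onI) (use uniq in auto)
  show "reps ((\<lambda>(r,s). r + p ^ n * s) ` (R \<times> R1)) (principal_ideal (p ^ Suc n))"
    unfolding reps_pi_iff
  proof (intro conjI allI ballI impI)
    fix x
    obtain r where r: "r \<in> R" "p ^ n dvd x - r" using R by (auto simp: reps_pi_iff)
    then obtain y where y: "x - r = p ^ n * y" by (auto elim: dvdE)
    obtain s where s: "s \<in> R1" "p dvd y - s" using R1 by (auto simp: reps_pi_iff)
    then obtain z where z: "y - s = p * z" by (auto elim: dvdE)
    have "x - (r + p ^ n * s) = p ^ Suc n * z"
      using y z by (simp add: algebra_simps)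
    then have "p ^ Suc n dvd x - (r + p ^ n * s)" by simp
    moreover have "r + p ^ n * s \<in> (\<lambda>(r,s). r + p ^ n * s) ` (R \<times> R1)"
      using r s by force
    ultimately show "\<exists>v\<in>(\<lambda>(r,s). r + p ^ n * s) ` (R \<times> R1). p ^ Suc n dvd x - v"
      by blast
  next
    fix v v' assume "v \<in> (\<lambda>(r,s). r + p ^ n * s) ` (R \<times> R1)" "v' \<in> (\<lambda>(r,s). r + p ^ n * s) ` (R \<times> R1)"
      "p ^ Suc n dvd v - v'"
    then show "v = v'" using uniq by auto
  qed
qed



lemma acc:
  fixes h :: "nat \<Rightarrow> 'a::comm_ring_1 set"
  assumes pid: "\<And>I::'a set. is_ideal I \<Longrightarrow> \<exists>g. I = principal_ideal g"
    and h: "\<And>n. is_ideal (h n)" "\<And>n. h n \<subset> h (Suc n)"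
  shows False
proof -
  have mono: "h i \<subseteq> h j" if "i \<le> j" for i j
    by (rule lift_Suc_mono_le[of h, OF _ that]) (use h(2) in \<open>simp add: less_imp_le\<close>)
  define U where "U = \<Union>(range h)"
  have "is_ideal U"
    unfolding is_ideal_def
  proof (intro conjI ballI allI)
    show "0 \<in> U" using h(1)[of 0] by (auto simp: U_def is_ideal_def)
  next
    fix x y assume "x \<in> U" "y \<in> U"
    then obtain i j where "x \<in> h i" "y \<in> h j" by (auto simp: U_def)
    then have "x \<in> h (max i j)" "y \<in> h (max i j)" using mono[of i "max i j"] mono[of j "max i j"] by auto
    then have "x + y \<in> h (max i j)" using h(1) by (auto simp: is_ideal_def)
    then show "x + y \<in> U" by (auto simp: U_def)
  next
    fix r x assume "x \<in> U"
    then obtain i where "x \<in> h i" by (auto simp: U_def)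
    then have "r * x \<in> h i" using h(1) by (auto simp: is_ideal_def)
    then show "r * x \<in> U" by (auto simp: U_def)
  qed
  then obtain g where g: "U = principal_ideal g" using pid by blast
  have "g \<in> U" unfolding g by (simp add: P_mem)
  then obtain k where k: "g \<in> h k" by (auto simp: U_def)
  have "U \<subseteq> h k"
  proof
    fix x assume "x \<in> U"
    then have "g dvd x" unfolding g by (simp add: P_mem)
    then obtain r where "x = g * r" by (auto elim: dvdE)
    then have "x = r * g" by (simp add: mult.commute)
    then show "x \<in> h k" using k h(1)[of k] by (auto simp: is_ideal_def)
  qed
  moreover have "h (Suc k) \<subseteq> U" by (auto simp: U_def)
  ultimately show False using h(2)[of k] by blast
qed

lemma max_exists:
  fixes I :: "'a::comm_ring_1 set"
  assumes pid: "\<And>I::'a set. is_ideal I \<Longrightarrow> \<exists>g. I = principal_ideal g"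
    and I: "is_ideal I" "I \<noteq> UNIV"
  shows "\<exists>M. maximal_ideal M \<and> I \<subseteq> M"
proof (rule ccontr)
  assume nex: "\<not> ?thesis"
  define Q where "Q = (\<lambda>J::'a set. is_ideal J \<and> J \<noteq> UNIV \<and> I \<subseteq> J)"
  have ex: "\<exists>J'. is_ideal J' \<and> J \<subseteq> J' \<and> J' \<noteq> J \<and> J' \<noteq> UNIV" if "Q J" for J
  proof -
    have "\<not> maximal_ideal J" using nex that by (auto simp: Q_def)
    then show ?thesis using that unfolding Q_def maximal_ideal_def by blast
  qed
  define step where "step = (\<lambda>J::'a set. SOME J'. is_ideal J' \<and> J \<subseteq> J' \<and> J' \<noteq> J \<and> J' \<noteq> UNIV)"
  have st: "is_ideal (step J) \<and> J \<subseteq> step J \<and> step J \<noteq> J \<and> step J \<noteq> UNIV" if "Q J" for J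
    unfolding step_def by (rule someI_ex[OF ex[OF that]])
  define h where "h = (\<lambda>n. (step ^^ n) I)"
  have Qh: "Q (h n)" for n
  proof (induction n)
    case 0 then show ?case using I by (simp add: Q_def h_def)
  next
    case (Suc n)
    then show ?case using st[OF Suc] by (auto simp: Q_def h_def)
  qed
  show False
  proof (rule acc[OF pid])
    fix n
    show "is_ideal (h n)" using Qh by (simp add: Q_def)
    show "h n \<subset> h (Suc n)" using st[OF Qh[of n]] by (auto simp: h_def)
  qed
qed

locale dvr_ctx =
  fixes p :: "'a::idom"
  assumes pid: "\<And>I::'a set. is_ideal I \<Longrightarrow> \<exists>g. I = principal_ideal g"
    and p0: "p \<noteq> 0" and pnu: "\<not> p dvd 1"
    and pmax: "max_ideal = principal_ideal p"
    and nonunit_dvd: "\<And>y. \<not> y dvd 1 \<Longrightarrow> p dvd y"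
begin

lemma fact_ex:
  assumes g: "g \<noteq> 0"
  shows "\<exists>n u. u dvd 1 \<and> g = p ^ n * u"
proof (rule ccontr)
  assume nex: "\<not> ?thesis"
  have pd: "p ^ n dvd g" for n
  proof (induction n)
    case 0 then show ?case by simp
  next
    case (Suc n)
    then obtain c where c: "g = p ^ n * c" by (auto elim: dvdE)
    then have "\<not> c dvd 1" using nex by blast
    then have "p dvd c" by (rule nonunit_dvd)
    then obtain d where d: "c = p * d" by (auto elim: dvdE)
    have "g = p ^ Suc n * d" unfolding c d by (simp add: algebra_simps)
    then show ?case by (simp add: dvd_def)
  qed
  define c where "c = (\<lambda>n. SOME c. g = p ^ n * c)"
  have c: "g = p ^ n * c n" for n
  proof -
    obtain k where "g = p ^ n * k" using pd[of n] by (auto elim: dvdE)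
    then show ?thesis unfolding c_def by (rule someI)
  qed
  have cs: "c n = p * c (Suc n)" for n
  proof -
    have "p ^ n * c n = g" by (rule c[symmetric])
    also have "g = p ^ Suc n * c (Suc n)" by (rule c)
    also have "\<dots> = p ^ n * (p * c (Suc n))" by (simp add: algebra_simps)
    finally have eq: "p ^ n * c n = p ^ n * (p * c (Suc n))" .
    have "p ^ n \<noteq> 0" using p0 by simp
    then show ?thesis using eq mult_left_cancel by blast
  qed
  have cnz: "c n \<noteq> 0" for n
  proof
    assume "c n = 0" then have "g = 0" using c[of n] by simp
    then show False using g by simp
  qed
  show False
  proof (rule acc[OF pid])
    fix n
    show "is_ideal (principal_ideal (c n))" by (rule P_ideal)
    have "c (Suc n) dvd c n" using cs[of n] by simp
    then have "principal_ideal (c n) \<subseteq> principal_ideal (c (Suc n))"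
      by (simp only: P_sub)
    moreover have "\<not> c n dvd c (Suc n)"
    proof
      assume "c n dvd c (Suc n)"
      then obtain k where k: "c (Suc n) = c n * k" by (auto elim: dvdE)
      have "c (Suc n) * 1 = c (Suc n)" by simp
      also have "\<dots> = c n * k" by (rule k)
      also have "\<dots> = c (Suc n) * (p * k)" by (simp add: cs[of n] algebra_simps)
      finally have "c (Suc n) * 1 = c (Suc n) * (p * k)" .
      then have "1 = p * k" using cnz[of "Suc n"] mult_left_cancel by blast
      then have "p dvd 1" by (intro dvdI[of _ _ k]) simp
      then show False using pnu by simp
    qed
    ultimately show "principal_ideal (c n) \<subset> principal_ideal (c (Suc n))"
      using P_sub by blast
  qed
qed

lemma pow_unit: "p ^ k dvd 1 \<Longrightarrow> k = 0"
proof (rule ccontr)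
  assume "p ^ k dvd 1" "k \<noteq> 0"
  moreover have "p dvd p ^ k" using \<open>k \<noteq> 0\<close> by (simp add: dvd_power)
  ultimately have "p dvd 1" using dvd_trans by blast
  then show False using pnu by simp
qed

lemma pow_dvd_le: assumes d: "p ^ b dvd p ^ a" shows "b \<le> a"
proof (rule ccontr)
  assume nle: "\<not> b \<le> a"
  obtain k where k: "p ^ a = p ^ b * k" using d by (auto elim: dvdE)
  define e where "e = b - a"
  have e: "b = a + e" "e \<noteq> 0" using nle by (auto simp: e_def)
  have "p ^ a * 1 = p ^ b * k" using k by (simp only: mult_1_right)
  also have "\<dots> = p ^ a * (p ^ e * k)" by (simp only: e(1) power_add mult.assoc)
  finally have "p ^ a * 1 = p ^ a * (p ^ e * k)" .
  moreover have "p ^ a \<noteq> 0" using p0 by simp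
  ultimately have "1 = p ^ e * k" using mult_left_cancel by blast
  then have "p ^ e dvd 1" by (intro dvdI[of _ _ k]) simp
  then have "e = 0" by (rule pow_unit)
  then show False using e(2) by simp
qed

lemma pow_inj: "inj (\<lambda>n::nat. p ^ n)"
proof (rule injI)
  fix a b assume "p ^ a = p ^ b"
  then have "p ^ b dvd p ^ a" "p ^ a dvd p ^ b" by simp_all
  then have "b \<le> a" "a \<le> b" by (simp_all only: pow_dvd_le)
  then show "a = b" by simp
qed

lemma UNIV_inf: "infinite (UNIV :: 'a set)"
  by (rule infinite_super[OF subset_UNIV range_inj_infinite[OF pow_inj]])

lemma pow_sub_iff: "principal_ideal (p ^ a) \<subseteq> principal_ideal (p ^ b) \<longleftrightarrow> b \<le> a"
proof
  assume "principal_ideal (p ^ a) \<subseteq> principal_ideal (p ^ b)"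
  then have d: "p ^ b dvd p ^ a" by (simp only: P_sub)
  then show "b \<le> a" by (rule pow_dvd_le)
next
  assume "b \<le> a" then show "principal_ideal (p ^ a) \<subseteq> principal_ideal (p ^ b)"
    unfolding P_sub by (rule le_imp_power_dvd)
qed

lemma pow_eq_iff: "principal_ideal (p ^ a) = principal_ideal (p ^ b) \<longleftrightarrow> a = b"
proof
  assume eq: "principal_ideal (p ^ a) = principal_ideal (p ^ b)"
  then have "principal_ideal (p ^ a) \<subseteq> principal_ideal (p ^ b)" "principal_ideal (p ^ b) \<subseteq> principal_ideal (p ^ a)"
    by simp_all
  then have "b \<le> a" "a \<le> b" by (simp_all only: pow_sub_iff)
  then show "a = b" by simp
qed simp

lemma classify:
  assumes I: "is_ideal I" "finite_index I"
  shows "\<exists>n. I = principal_ideal (p ^ n)"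
proof -
  obtain g where g: "I = principal_ideal g" using pid I by blast
  have "g \<noteq> 0"
  proof
    assume "g = 0"
    then have "I = {0}" using g by (auto simp: P_mem)
    then have "cosets I = (\<lambda>x. {x}) ` UNIV" by (auto simp: cosets_def)
    then have "finite ((\<lambda>x::'a. {x}) ` UNIV)" using I(2) by (simp add: finite_index_def)
    then have "finite (UNIV :: 'a set)" by (rule finite_imageD) (auto simp: inj_on_def)
    then show False using UNIV_inf by simp
  qed
  then obtain n u where u: "u dvd 1" "g = p ^ n * u" using fact_ex by blast
  obtain v where v: "1 = u * v" using u(1) by (auto elim: dvdE)
  have "p ^ n = g * v" using u(2) v by (simp add: mult.assoc)
  then have "g dvd p ^ n" by simp
  moreover have "p ^ n dvd g" using u(2) by simp
  ultimately have "principal_ideal g = principal_ideal (p ^ n)"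
    using P_sub by (metis subset_antisym)
  then show ?thesis using g by blast
qed

end



lemma dvr_setup:
  assumes d: "is_dvr TYPE('a::idom)"
  shows "\<exists>p::'a. dvr_ctx p"
proof -
  have D: "(\<forall>I::'a set. is_ideal I \<longrightarrow> (\<exists>g. I = principal_ideal g)) \<and> (\<exists>!M::'a set. maximal_ideal M)
      \<and> (\<exists>x::'a. x \<noteq> 0 \<and> \<not> x dvd 1)"
    using d unfolding is_dvr_def by assumption
  have pid: "\<And>I::'a set. is_ideal I \<Longrightarrow> \<exists>g. I = principal_ideal g" using D by blast
  have ex1: "\<exists>!M::'a set. maximal_ideal M" using D by blast
  have exx: "\<exists>x::'a. x \<noteq> 0 \<and> \<not> x dvd 1" using D by blast
  have mM: "maximal_ideal (max_ideal :: 'a set)"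
    unfolding max_ideal_def by (rule theI'[OF ex1])
  obtain M0 :: "'a set" where M0: "maximal_ideal M0" "\<forall>M. maximal_ideal M \<longrightarrow> M = M0"
    by (rule ex1E[OF ex1])
  have uniq: "M = max_ideal" if "maximal_ideal M" for M :: "'a set"
  proof -
    have "M = M0" using M0(2) that by blast
    moreover have "max_ideal = M0" using M0(2) mM by blast
    ultimately show ?thesis by simp
  qed
  have "is_ideal (max_ideal :: 'a set)" using mM by (simp add: maximal_ideal_def)
  then obtain p :: 'a where pM: "max_ideal = principal_ideal p"
    using pid by blast
  have nonunit_dvd: "p dvd y" if y: "\<not> y dvd 1" for y :: 'a
  proof -
    have "principal_ideal y \<noteq> UNIV"
    proof
      assume "principal_ideal y = UNIV"
      then have "(1::'a) \<in> principal_ideal y" by simp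
      then show False using y by (simp add: P_mem)
    qed
    then obtain M where M: "maximal_ideal M" "principal_ideal y \<subseteq> M"
      using max_exists[OF pid P_ideal \<open>principal_ideal y \<noteq> UNIV\<close>] by blast
    have "y \<in> principal_ideal y" by (simp add: P_mem)
    then have "y \<in> principal_ideal p" using M uniq[OF M(1)] pM by auto
    then show ?thesis by (simp add: P_mem)
  qed
  have pnu: "\<not> p dvd 1"
  proof
    assume "p dvd 1"
    then have "principal_ideal p = UNIV" by (auto simp: P_mem intro: dvd_trans[OF _ one_dvd])
    then show False using mM pM by (simp add: maximal_ideal_def)
  qed
  have p0: "p \<noteq> 0"
  proof
    assume "p = 0"
    obtain x :: 'a where x: "x \<noteq> 0" "\<not> x dvd 1" using exx by blast
    then have "p dvd x" by (intro nonunit_dvd)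
    then show False using \<open>p = 0\<close> x by simp
  qed
  have "dvr_ctx p"
    by (unfold_locales) (use pid p0 pnu pM nonunit_dvd in auto)
  then show ?thesis by blast
qed

context dvr_ctx
begin

lemma fin_res:
  assumes c: "madic_compact TYPE('a)"
  shows "finite (cosets (principal_ideal p))"
proof -
  let ?M = "principal_ideal p"
  have I: "is_ideal ?M" by (rule P_ideal)
  have opn: "madic_open U" if UC: "U \<in> cosets ?M" for U
    unfolding madic_open_def
  proof
    fix x assume x: "x \<in> U"
    obtain c where U: "U = (\<lambda>y. c + y) ` ?M" using UC by (auto simp: cosets_def)
    then obtain i where i: "i \<in> ?M" "x = c + i" using x by auto
    have "(\<lambda>y. x + y) ` principal_ideal (p ^ 1) \<subseteq> U"
    proof
      fix z assume "z \<in> (\<lambda>y. x + y) ` principal_ideal (p ^ 1)"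
      then obtain j where j: "j \<in> ?M" "z = x + j" by auto
      have "i + j \<in> ?M" using i j by (auto simp: P_mem)
      moreover have "z = c + (i + j)" using i j by simp
      ultimately show "z \<in> U" unfolding U by blast
    qed
    then show "\<exists>n g. max_ideal = principal_ideal g \<and> (\<lambda>y. x + y) ` principal_ideal (g ^ n) \<subseteq> U"
      using pmax by blast
  qed
  have cov: "\<Union>(cosets ?M) = UNIV"
  proof -
    have "x \<in> (\<lambda>y. x + y) ` ?M" for x
      by (rule image_eqI[of _ _ 0]) (auto simp: P_mem)
    then show ?thesis by (auto simp: cosets_def)
  qed
  have cc: "\<forall>\<U>::'a set set. (\<forall>U\<in>\<U>. madic_open U) \<and> \<Union>\<U> = UNIV \<longrightarrow>
       (\<exists>\<F>\<subseteq>\<U>. finite \<F> \<and> \<Union>\<F> = UNIV)"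
    using c unfolding madic_compact_def by assumption
  have "(\<forall>U\<in>cosets ?M. madic_open U) \<and> \<Union>(cosets ?M) = UNIV" using opn cov by blast
  then have "\<exists>F\<subseteq>cosets ?M. finite F \<and> \<Union>F = UNIV" using cc by (rule_tac mp[OF spec[OF cc]])
  then obtain F where F: "F \<subseteq> cosets ?M" "finite F" "\<Union>F = UNIV" by blast
  have "cosets ?M \<subseteq> F"
  proof
    fix C assume C: "C \<in> cosets ?M"
    obtain c where Cc: "C = (\<lambda>y. c + y) ` ?M" using C by (auto simp: cosets_def)
    have "c \<in> \<Union>F" using F(3) by simp
    then obtain C' where C': "C' \<in> F" "c \<in> C'" by blast
    have "C' \<in> cosets ?M" using C'(1) F(1) by blast
    then obtain c' where C'c: "C' = (\<lambda>y. c' + y) ` ?M" by (auto simp: cosets_def)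
    obtain i where "i \<in> ?M" "c = c' + i" using C'(2) C'c by auto
    then have "c - c' \<in> ?M" by simp
    then have "C = C'" unfolding Cc C'c by (rule coset_eq[OF I, THEN iffD2])
    then show "C \<in> F" using C' by simp
  qed
  then show ?thesis using F(2) by (rule finite_subset)
qed

lemma res_ge2:
  assumes fin: "finite (cosets (principal_ideal p))"
  shows "index (principal_ideal p) \<ge> 2"
proof -
  let ?M = "principal_ideal p"
  have I: "is_ideal ?M" by (rule P_ideal)
  let ?C0 = "(\<lambda>y. 0 + y) ` ?M" and ?C1 = "(\<lambda>y. 1 + y) ` ?M"
  have "?C0 \<noteq> ?C1" using coset_eq[OF I, of 0 1] pnu by (simp add: P_mem)
  moreover have "?C0 \<in> cosets ?M" "?C1 \<in> cosets ?M" unfolding cosets_def by blast+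
  then have "{?C0, ?C1} \<subseteq> cosets ?M" by blast
  ultimately have "card {?C0, ?C1} \<le> card (cosets ?M)" using fin by (intro card_mono) auto
  then show ?thesis using \<open>?C0 \<noteq> ?C1\<close> by (simp add: index_def)
qed

lemma pow_index:
  assumes fin: "finite (cosets (principal_ideal p))"
  shows "index (principal_ideal (p ^ n)) = index (principal_ideal p) ^ n \<and> finite_index (principal_ideal (p ^ n))"
proof -
  obtain R1 where R1: "reps R1 (principal_ideal p)" using reps_ex[OF P_ideal] by blast
  have c1: "index (principal_ideal p) = card R1" and f1: "finite R1"
    using reps_index[OF P_ideal R1] fin by (auto simp: finite_index_def)
  have "\<exists>R. reps R (principal_ideal (p ^ n)) \<and> finite R \<and> card R = card R1 ^ n"
  proof (induction n)
    case 0
    have "reps {0} (principal_ideal (p ^ 0))" by (simp add: reps_pi_iff)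
    then show ?case by fastforce
  next
    case (Suc n)
    then obtain R where R: "reps R (principal_ideal (p ^ n))" "finite R" "card R = card R1 ^ n" by blast
    let ?R' = "(\<lambda>(r,s). r + p ^ n * s) ` (R \<times> R1)"
    have "reps ?R' (principal_ideal (p ^ Suc n))" "inj_on (\<lambda>(r,s). r + p ^ n * s) (R \<times> R1)"
      using reps_step[OF p0 R(1) R1] by blast+
    moreover have "card ?R' = card R * card R1"
      using card_image[OF \<open>inj_on _ _\<close>] by (simp add: card_cartesian_product)
    moreover have "finite ?R'" using R(2) f1 by simp
    ultimately show ?case using R(3) by (intro exI[of _ ?R']) (simp add: mult.commute)
  qed
  then obtain R where R: "reps R (principal_ideal (p ^ n))" "finite R" "card R = card R1 ^ n" by blast
  show ?thesis using reps_index[OF P_ideal R(1)] R c1 by simp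
qed

end

lemma powr_nat_pow:
  assumes "q > 0"
  shows "(of_nat (q ^ n) :: complex) powr z = (of_nat q powr z) ^ n"
proof (induction n)
  case 0 then show ?case by simp
next
  case (Suc n)
  have "(of_nat (q ^ Suc n) :: complex) = of_nat q * of_nat (q ^ n)" by simp
  also have "\<dots> powr z = of_nat q powr z * of_nat (q ^ n) powr z"
    by (rule powr_times_real) auto
  finally show ?case using Suc by simp
qed


context dvr_ctx
begin

lemma subreps_eq:
  assumes fin: "finite (cosets (principal_ideal p))"
  shows "star_subreps (Suc m) (\<lambda>_. id) = (\<lambda>e. \<lambda>i. principal_ideal (p ^ e i)) ` Eset m"
proof (intro set_eqI iffI)
  fix L :: "nat \<Rightarrow> 'a set" assume L: "L \<in> star_subreps (Suc m) (\<lambda>_. id)"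
  have Lp: "is_ideal (L i) \<and> finite_index (L i)" if "i \<in> {1..Suc m}" for i
    using L that unfolding star_subreps_def by blast
  have Lout: "L i = UNIV" if "i \<notin> {1..Suc m}" for i
    using L that unfolding star_subreps_def by blast
  have Larr: "L 1 \<subseteq> L j" if "j \<in> {2..Suc m}" for j
  proof -
    have "(1, j) \<in> star_arrows (Suc m)" using that by (auto simp: star_arrows_def)
    moreover have "\<forall>\<phi>\<in>star_arrows (Suc m). id ` L (fst \<phi>) \<subseteq> L (snd \<phi>)"
      using L unfolding star_subreps_def by blast
    ultimately have "id ` L 1 \<subseteq> L j" by fastforce
    then show ?thesis by simp
  qed
  define e where "e i = (if i \<in> {1..Suc m} then (SOME n. L i = principal_ideal (p ^ n)) else 0)" for i
  have Le: "L i = principal_ideal (p ^ e i)" for i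
  proof (cases "i \<in> {1..Suc m}")
    case True
    have "\<exists>n. L i = principal_ideal (p ^ n)" using Lp[OF True] classify by blast
    then have "L i = principal_ideal (p ^ (SOME n. L i = principal_ideal (p ^ n)))" by (rule someI_ex)
    then show ?thesis unfolding e_def using True by simp
  next
    case False
    then have "e i = 0" by (auto simp: e_def)
    then show ?thesis using Lout[OF False] by (simp add: P_one)
  qed
  have "e \<in> Eset m"
    unfolding Eset_def
  proof (intro CollectI conjI allI impI ballI)
    fix i assume "i \<notin> {1..Suc m}" then show "e i = 0" by (auto simp: e_def)
  next
    fix j assume j: "j \<in> {2..Suc m}"
    have "principal_ideal (p ^ e 1) \<subseteq> principal_ideal (p ^ e j)" using Larr[OF j] Le by metis
    then show "e j \<le> e 1" by (simp only: pow_sub_iff)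
  qed
  moreover have "L = (\<lambda>i. principal_ideal (p ^ e i))" using Le by blast
  ultimately show "L \<in> (\<lambda>e. \<lambda>i. principal_ideal (p ^ e i)) ` Eset m" by blast
next
  fix L :: "nat \<Rightarrow> 'a set" assume "L \<in> (\<lambda>e. \<lambda>i. principal_ideal (p ^ e i)) ` Eset m"
  then obtain e where e: "e \<in> Eset m" and L: "L = (\<lambda>i. principal_ideal (p ^ e i))" by blast
  have e0: "e i = 0" if "i \<notin> {1..Suc m}" for i using e that by (simp add: Eset_def)
  have e1: "e j \<le> e 1" if "j \<in> {2..Suc m}" for j using e that by (simp add: Eset_def)
  show "L \<in> star_subreps (Suc m) (\<lambda>_. id)"
    unfolding star_subreps_def
  proof (intro CollectI conjI allI impI ballI)
    fix i assume "i \<in> {1..Suc m}"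
    show "is_ideal (L i)" by (simp add: L P_ideal)
    show "finite_index (L i)" using pow_index[OF fin] by (simp add: L)
  next
    fix i assume "i \<notin> {1..Suc m}"
    then show "L i = UNIV" by (simp add: L e0 P_one)
  next
    fix \<phi> assume "\<phi> \<in> star_arrows (Suc m)"
    then obtain j where j: "\<phi> = (1, j)" "j \<in> {2..Suc m}" by (auto simp: star_arrows_def)
    have "principal_ideal (p ^ e 1) \<subseteq> principal_ideal (p ^ e j)"
      using e1[OF j(2)] by (simp only: pow_sub_iff)
    then show "id ` L (fst \<phi>) \<subseteq> L (snd \<phi>)" by (simp add: L j(1))
  qed
qed

lemma Lam_inj: "inj_on (\<lambda>e. \<lambda>i. principal_ideal (p ^ e i)) A"
proof (rule inj_onI)
  fix e e' assume "e \<in> A" "e' \<in> A" and eq: "(\<lambda>i. principal_ideal (p ^ e i)) = (\<lambda>i. principal_ideal (p ^ e' i))"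
  show "e = e'"
  proof
    fix i
    have "principal_ideal (p ^ e i) = principal_ideal (p ^ e' i)" using eq by (rule fun_cong)
    then show "e i = e' i" by (simp only: pow_eq_iff)
  qed
qed

lemma zeta_has_sum:
  assumes c: "madic_compact TYPE('a)" and s: "Re s > 0"
  shows "(zeta_term (Suc m) s has_sum
           (let t = (of_nat (index (principal_ideal p)) :: complex) powr (- s)
            in carlitz m t t / (\<Prod>i\<in>{1..Suc m}. (1 - t ^ i))))
         (star_subreps (Suc m) (\<lambda>_. id) :: (nat \<Rightarrow> 'a set) set)"
proof -
  have fin: "finite (cosets (principal_ideal p))" by (rule fin_res[OF c])
  define q where "q = index (principal_ideal p)"
  have q2: "q \<ge> 2" unfolding q_def by (rule res_ge2[OF fin])
  define t where "t = (of_nat q :: complex) powr (- s)"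
  have nt: "norm t < 1"
  proof -
    have "norm t = real q powr Re (- s)" unfolding t_def
      by (subst norm_powr_real_powr) auto
    also have "\<dots> < real q powr 0" using q2 s by (intro powr_less_mono) auto
    also have "\<dots> = 1" using q2 by simp
    finally show ?thesis .
  qed
  have zt: "zeta_term (Suc m) s (\<lambda>i. principal_ideal (p ^ e i)) = t ^ (\<Sum>i\<in>{1..Suc m}. e i)" for e
  proof -
    have "zeta_term (Suc m) s (\<lambda>i. principal_ideal (p ^ e i)) =
          (\<Prod>i\<in>{1..Suc m}. (of_nat (q ^ e i) :: complex) powr (- s))"
      unfolding zeta_term_def q_def using pow_index[OF fin] by simp
    also have "\<dots> = (\<Prod>i\<in>{1..Suc m}. t ^ e i)"
      unfolding t_def using q2 by (intro prod.cong refl powr_nat_pow) simp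
    also have "\<dots> = t ^ (\<Sum>i\<in>{1..Suc m}. e i)" by (rule power_sum[symmetric])
    finally show ?thesis .
  qed
  have "((\<lambda>e. t ^ (\<Sum>i\<in>{1..Suc m}. e i)) has_sum (carlitz m t t / (\<Prod>i\<in>{1..Suc m}. (1 - t ^ i)))) (Eset m)"
    by (rule main_sum[OF nt])
  then have "((zeta_term (Suc m) s \<circ> (\<lambda>e. \<lambda>i. principal_ideal (p ^ e i))) has_sum
       (carlitz m t t / (\<Prod>i\<in>{1..Suc m}. (1 - t ^ i)))) (Eset m)"
    by (simp add: o_def zt)
  then have "(zeta_term (Suc m) s has_sum (carlitz m t t / (\<Prod>i\<in>{1..Suc m}. (1 - t ^ i))))
       ((\<lambda>e. \<lambda>i. principal_ideal (p ^ e i)) ` Eset m)"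
    by (subst has_sum_reindex[OF Lam_inj])
  then show ?thesis unfolding subreps_eq[OF fin] Let_def t_def q_def .
qed

end

theorem proposition3p3:
  fixes a :: nat and s :: complex and q :: nat
  assumes "a \<ge> 1"
    and "is_dvr TYPE('o::idom)"
    and "madic_compact TYPE('o)"
    and "q = residue_card TYPE('o)"
    and "Re s > 0"
  shows "(zeta_term a s has_sum
           (let t = (of_nat q :: complex) powr (- s)
            in carlitz (a - 1) t t / (\<Prod>i\<in>{1..a}. (1 - t ^ i))))
         (star_subreps a (\<lambda>_. id) :: (nat \<Rightarrow> 'o set) set)"
proof -
  obtain p :: 'o where D: "dvr_ctx p" using dvr_setup[OF assms(2)] by blast
  interpret D: dvr_ctx p by (rule D)
  have aa: "Suc (a - 1) = a" using assms(1) by simp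
  have qq: "index (principal_ideal p) = q" using assms(4) D.pmax by (simp add: residue_card_def)
  show ?thesis using D.zeta_has_sum[OF assms(3) assms(5), of "a - 1"] unfolding aa qq .
qed



end
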